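(* Let $m\ge 1$, let $t_1<\cdots<t_m$ be real, and let $\omega_0,\dots,\omega_m$ be real with $\sum_{k=0}^{\ell}\omega_k\ge0$ for $\ell=0,\dots,m$ such that $w(x)={\rm e}^{-x^2}\big(\omega_0+\sum_{k=1}^m\omega_k\theta(x-t_k)\big)$ is not identically zero. Let $n\ge1$ and let $p(n)$ be the coefficient of $z^{n-1}$ in the monic orthogonal polynomial $P_n(z)$. Then $$p(n)=-\frac12\sum_{j=0}^{n-1}\sum_{k=1}^mR_{j,k},$$ and, provided $R_{n,k}\neq0$ for all $k$, $$p(n)=-\frac12\Big(\sum_{k=1}^mr_{n,k}+n\Big)\sum_{k=1}^mR_{n,k}-\sum_{k=1}^m\frac{r_{n,k}^2}{R_{n,k}}+\sum_{k=1}^mt_kr_{n,k}.$$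
   Context: $\theta(y)=1$ for $y>0$ and $0$ otherwise. $P_n$ ($n\ge0$) is the monic degree-$n$ polynomial orthogonal w.r.t. $w$ on $\mathbb{R}$, $\int P_jP_kw\,dx=h_k\delta_{jk}$, $h_k>0$; write $P_n(z)=z^n+p(n)z^{n-1}+\cdots$. For $k=1,\dots,m$: $R_{n,k}:=\omega_k{\rm e}^{-t_k^2}P_n(t_k)^2/h_n$ ($n\ge0$) and $r_{n,k}:=\omega_k{\rm e}^{-t_k^2}P_n(t_k)P_{n-1}(t_k)/h_{n-1}$ ($n\ge1$). *)

theory Defs
  imports "HOL-Analysis.Analysis" "HOL-Computational_Algebra.Polynomial"
begin

definition theta :: "real \<Rightarrow> real" where
  "theta y = (if y > 0 then 1 else 0)"

definition wgt :: "nat \<Rightarrow> (nat \<Rightarrow> real) \<Rightarrow> (nat \<Rightarrow> real) \<Rightarrow> real \<Rightarrow> real" where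
  "wgt m \<omega> t x = exp (-(x\<^sup>2)) * (\<omega> 0 + (\<Sum>k=1..m. \<omega> k * theta (x - t k)))"

definition is_monic_OPS :: "(real \<Rightarrow> real) \<Rightarrow> (nat \<Rightarrow> real poly) \<Rightarrow> bool" where
  "is_monic_OPS w P \<longleftrightarrow>
     (\<forall>n. degree (P n) = n \<and> lead_coeff (P n) = 1) \<and>
     (\<forall>j k. j \<noteq> k \<longrightarrow> (LINT x|lborel. poly (P j) x * poly (P k) x * w x) = 0) \<and>
     (\<forall>k. (LINT x|lborel. (poly (P k) x)\<^sup>2 * w x) > 0)"

definition hnorm :: "(real \<Rightarrow> real) \<Rightarrow> (nat \<Rightarrow> real poly) \<Rightarrow> nat \<Rightarrow> real" where
  "hnorm w P k = (LINT x|lborel. (poly (P k) x)\<^sup>2 * w x)"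

definition RR :: "(real \<Rightarrow> real) \<Rightarrow> (nat \<Rightarrow> real poly) \<Rightarrow> (nat \<Rightarrow> real) \<Rightarrow> (nat \<Rightarrow> real)
    \<Rightarrow> nat \<Rightarrow> nat \<Rightarrow> real" where
  "RR w P \<omega> t n k = \<omega> k * exp (-((t k)\<^sup>2)) * (poly (P n) (t k))\<^sup>2 / hnorm w P n"

definition rr :: "(real \<Rightarrow> real) \<Rightarrow> (nat \<Rightarrow> real poly) \<Rightarrow> (nat \<Rightarrow> real) \<Rightarrow> (nat \<Rightarrow> real)
    \<Rightarrow> nat \<Rightarrow> nat \<Rightarrow> real" where
  "rr w P \<omega> t n k = \<omega> k * exp (-((t k)\<^sup>2)) * poly (P n) (t k) * poly (P (n - 1)) (t k)
                      / hnorm w P (n - 1)"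

end

theory Submission imports Defs "HOL-Probability.Distributions" "HOL-Real_Asymp.Real_Asymp" begin

lemma integrable_mono_gauss: "integrable lborel (\<lambda>x::real. x ^ k * exp (-(x\<^sup>2)))"
proof -
  have "integrable lborel (\<lambda>x. normal_density 0 (sqrt (1/2)) x * (x - 0)^k)"
    using integrable_normal_moment[of "sqrt (1/2)" 0 k] by simp
  then have "integrable lborel (\<lambda>x. sqrt pi * (normal_density 0 (sqrt (1/2)) x * (x - 0)^k))"
    by simp
  moreover have "(\<lambda>x. sqrt pi * (normal_density 0 (sqrt (1/2)) x * (x - 0)^k)) = (\<lambda>x. x^k * exp(-(x\<^sup>2)))"
    by (rule ext) (simp add: normal_density_def power2_eq_square real_sqrt_mult)
  ultimately show ?thesis by metis
qed

lemma integrable_poly_gauss: "integrable lborel (\<lambda>x::real. poly f x * exp (-(x\<^sup>2)))"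
proof -
  have "integrable lborel (\<lambda>x::real. \<Sum>i\<le>degree f. coeff f i * (x ^ i * exp (-(x\<^sup>2))))"
    by (auto intro!: integrable_sum integrable_mult_right integrable_mono_gauss)
  then show ?thesis
    by (simp add: poly_altdef sum_distrib_right mult.assoc)
qed

lemma lim_poly_gauss_top: "((\<lambda>x::real. poly f x * exp (-(x\<^sup>2))) \<longlongrightarrow> 0) at_top"
proof -
  have "((\<lambda>x::real. \<Sum>i\<le>degree f. coeff f i * (x ^ i * exp (-(x\<^sup>2)))) \<longlongrightarrow> (\<Sum>i\<le>degree f. coeff f i * 0)) at_top"
    by (intro tendsto_sum tendsto_mult tendsto_const) real_asymp
  then show ?thesis
    by (simp add: poly_altdef sum_distrib_right mult.assoc)
qed

lemma lim_poly_gauss_bot: "((\<lambda>x::real. poly f x * exp (-(x\<^sup>2))) \<longlongrightarrow> 0) at_bot"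
proof -
  have "((\<lambda>x::real. \<Sum>i\<le>degree f. coeff f i * (x ^ i * exp (-(x\<^sup>2)))) \<longlongrightarrow> (\<Sum>i\<le>degree f. coeff f i * 0)) at_bot"
    by (intro tendsto_sum tendsto_mult tendsto_const) real_asymp
  then show ?thesis
    by (simp add: poly_altdef sum_distrib_right mult.assoc)
qed

definition DD :: "real poly \<Rightarrow> real poly" where
  "DD f = pderiv f - [:0, 2:] * f"

lemma deriv_gauss: "((\<lambda>x. poly f x * exp (-(x\<^sup>2))) has_real_derivative poly (DD f) x * exp (-(x\<^sup>2))) (at x)"
  unfolding DD_def
  by (auto intro!: derivative_eq_intros simp: algebra_simps power2_eq_square)

lemma ibp_full: "(LINT x|lborel. poly (DD f) x * exp (-(x\<^sup>2))) = 0"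
proof -
  have "(LBINT x=-\<infinity>..\<infinity>. poly (DD f) x * exp (-(x\<^sup>2))) = 0 - 0"
  proof (rule interval_integral_FTC_integrable[where F="\<lambda>x. poly f x * exp (-(x\<^sup>2))"])
    show "set_integrable lborel (einterval (- \<infinity>) \<infinity>) (\<lambda>x. poly (DD f) x * exp (-(x\<^sup>2)))"
      by (simp add: set_integrable_def integrable_poly_gauss)
    show "((\<lambda>x. poly f x * exp (-(x\<^sup>2))) has_vector_derivative poly (DD f) x * exp (-(x\<^sup>2))) (at x)" for x
      using deriv_gauss by (simp add: has_real_derivative_iff_has_vector_derivative)
    show "isCont (\<lambda>x. poly (DD f) x * exp (-(x\<^sup>2))) x" for x
      by (intro continuous_intros)
    show "(((\<lambda>x. poly f x * exp (-(x\<^sup>2))) \<circ> real_of_ereal) \<longlongrightarrow> 0) (at_right (-\<infinity>))"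
      unfolding ereal_tendsto_simps by (rule lim_poly_gauss_bot)
    show "(((\<lambda>x. poly f x * exp (-(x\<^sup>2))) \<circ> real_of_ereal) \<longlongrightarrow> 0) (at_left \<infinity>)"
      unfolding ereal_tendsto_simps by (rule lim_poly_gauss_top)
  qed simp
  then show ?thesis
    by (simp add: interval_lebesgue_integral_def set_lebesgue_integral_def)
qed

lemma ibp_tail: "(LINT x|lborel. indicator {s<..} x * (poly (DD f) x * exp (-(x\<^sup>2)))) = - (poly f s * exp (-(s\<^sup>2)))"
proof -
  have "(LBINT x=ereal s..\<infinity>. poly (DD f) x * exp (-(x\<^sup>2))) = 0 - poly f s * exp (-(s\<^sup>2))"
  proof (rule interval_integral_FTC_integrable[where F="\<lambda>x. poly f x * exp (-(x\<^sup>2))"])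
    show "set_integrable lborel (einterval (ereal s) \<infinity>) (\<lambda>x. poly (DD f) x * exp (-(x\<^sup>2)))"
      unfolding set_integrable_def
      by (intro integrable_mult_indicator integrable_poly_gauss) auto
    show "((\<lambda>x. poly f x * exp (-(x\<^sup>2))) has_vector_derivative poly (DD f) x * exp (-(x\<^sup>2))) (at x)" for x
      using deriv_gauss by (simp add: has_real_derivative_iff_has_vector_derivative)
    show "isCont (\<lambda>x. poly (DD f) x * exp (-(x\<^sup>2))) x" for x
      by (intro continuous_intros)
    show "(((\<lambda>x. poly f x * exp (-(x\<^sup>2))) \<circ> real_of_ereal) \<longlongrightarrow> poly f s * exp (-(s\<^sup>2))) (at_right (ereal s))"
      unfolding ereal_tendsto_simps
    proof -
      have "isCont (\<lambda>x. poly f x * exp (-(x\<^sup>2))) s" by (intro continuous_intros)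
      then show "((\<lambda>x. poly f x * exp (-(x\<^sup>2))) \<longlongrightarrow> poly f s * exp (-(s\<^sup>2))) (at_right s)"
        using continuous_at_imp_continuous_at_within[of s _ "{s<..}"] by (simp add: continuous_within)
    qed
    show "(((\<lambda>x. poly f x * exp (-(x\<^sup>2))) \<circ> real_of_ereal) \<longlongrightarrow> 0) (at_left \<infinity>)"
      unfolding ereal_tendsto_simps by (rule lim_poly_gauss_top)
  qed simp
  then show ?thesis
    by (simp add: interval_integral_to_infinity_eq set_lebesgue_integral_def)
qed


definition JJ :: "nat \<Rightarrow> (nat \<Rightarrow> real) \<Rightarrow> (nat \<Rightarrow> real) \<Rightarrow> real poly \<Rightarrow> real" where
  "JJ m \<omega> t q = (LINT x|lborel. poly q x * wgt m \<omega> t x)"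

lemma theta_ind: "theta (x - s) = indicator {s<..} x"
  by (simp add: theta_def indicator_def)

lemma wgt_expand: "poly q x * wgt m \<omega> t x = \<omega> 0 * (poly q x * exp (-(x\<^sup>2)))
   + (\<Sum>k=1..m. \<omega> k * (indicator {t k<..} x * (poly q x * exp (-(x\<^sup>2)))))"
  unfolding wgt_def theta_ind distrib_left sum_distrib_left
  by (intro arg_cong2[where f="(+)"] sum.cong refl) (simp_all only: mult_ac)

lemma integrable_ind_gauss: "integrable lborel (\<lambda>x::real. indicator {s<..} x * (poly q x * exp (-(x\<^sup>2))))"
proof -
  have "integrable lborel (\<lambda>x. indicat_real {s<..} x *\<^sub>R (poly q x * exp (-(x\<^sup>2))))"
    by (intro integrable_mult_indicator integrable_poly_gauss) auto
  then show ?thesis by simp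
qed

lemma integrable_wgt: "integrable lborel (\<lambda>x. poly q x * wgt m \<omega> t x)"
  unfolding wgt_expand
  by (intro Bochner_Integration.integrable_add integrable_mult_right Bochner_Integration.integrable_sum
        integrable_ind_gauss integrable_poly_gauss)

lemma JJ_expand: "JJ m \<omega> t q = \<omega> 0 * (LINT x|lborel. poly q x * exp (-(x\<^sup>2)))
   + (\<Sum>k=1..m. \<omega> k * (LINT x|lborel. indicator {t k<..} x * (poly q x * exp (-(x\<^sup>2)))))"
  unfolding JJ_def wgt_expand
  apply (subst Bochner_Integration.integral_add integral_mult_right Bochner_Integration.integral_sum
        | intro Bochner_Integration.integrable_add integrable_mult_right Bochner_Integration.integrable_sum
        integrable_ind_gauss integrable_poly_gauss | simp)+
  done

lemma JJ_DD: "JJ m \<omega> t (DD f) = - (\<Sum>k=1..m. \<omega> k * exp (-((t k)\<^sup>2)) * poly f (t k))"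
  unfolding JJ_expand ibp_full ibp_tail
  by (simp add: sum_negf[symmetric] algebra_simps)

lemma JJ_add: "JJ m \<omega> t (p + q) = JJ m \<omega> t p + JJ m \<omega> t q"
  unfolding JJ_def using integrable_wgt[of p] integrable_wgt[of q]
  by (simp add: distrib_right)

lemma JJ_diff: "JJ m \<omega> t (p - q) = JJ m \<omega> t p - JJ m \<omega> t q"
  unfolding JJ_def using integrable_wgt[of p] integrable_wgt[of q]
  by (simp add: left_diff_distrib)

lemma JJ_smult: "JJ m \<omega> t (smult c p) = c * JJ m \<omega> t p"
  unfolding JJ_def by (simp add: mult.assoc)

lemma JJ_0: "JJ m \<omega> t 0 = 0"
  unfolding JJ_def by simp

lemmas JJ_lin = JJ_add JJ_diff JJ_smult JJ_0

context
  fixes m :: nat and \<omega> t :: "nat \<Rightarrow> real" and P :: "nat \<Rightarrow> real poly"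
  assumes OPS: "is_monic_OPS (wgt m \<omega> t) P"
begin

lemma degP: "degree (P n) = n"
  using OPS unfolding is_monic_OPS_def by auto

lemma lcP: "coeff (P n) n = 1"
  using OPS degP[of n] unfolding is_monic_OPS_def by metis

lemma coeffP_ge: "i \<ge> n \<Longrightarrow> coeff (P n) i = (if i = n then 1 else 0)"
  using lcP[of n] coeff_eq_0[of "P n" i] degP[of n] by auto

lemma orth: "j \<noteq> k \<Longrightarrow> JJ m \<omega> t (P j * P k) = 0"
  using OPS unfolding is_monic_OPS_def JJ_def by (simp add: mult.assoc)

lemma hJ: "hnorm (wgt m \<omega> t) P k = JJ m \<omega> t (P k * P k)"
  unfolding hnorm_def JJ_def by (simp add: power2_eq_square)

lemma hpos: "hnorm (wgt m \<omega> t) P k > 0"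
  using OPS unfolding is_monic_OPS_def hnorm_def by auto

lemma L1: "degree q \<le> d \<Longrightarrow> d < j \<Longrightarrow> JJ m \<omega> t (q * P j) = 0"
proof (induction d arbitrary: q)
  case 0
  have P0: "P 0 = 1"
    by (intro poly_eqI) (simp add: coeffP_ge coeff_1)
  have "q = smult (coeff q 0) (P 0)"
  proof (intro poly_eqI)
    fix i show "coeff q i = coeff (smult (coeff q 0) (P 0)) i"
      using 0 coeff_eq_0[of q i] by (cases i) (auto simp: P0 coeff_1)
  qed
  then have "JJ m \<omega> t (q * P j) = coeff q 0 * JJ m \<omega> t (P 0 * P j)"
    by (metis JJ_smult mult_smult_left)
  then show ?case using orth 0 by simp
next
  case (Suc d)
  define c where "c = coeff q (Suc d)"
  define q' where "q' = q - smult c (P (Suc d))"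
  have "degree q' \<le> d"
  proof (rule degree_le, intro allI impI)
    fix i assume "d < i"
    show "coeff q' i = 0"
    proof (cases "i = Suc d")
      case True then show ?thesis by (simp add: q'_def c_def lcP)
    next
      case False
      then have "i > Suc d" using \<open>d < i\<close> by simp
      then show ?thesis using Suc.prems(1) coeffP_ge[of "Suc d" i]
        by (simp add: q'_def coeff_eq_0)
    qed
  qed
  have "q = q' + smult c (P (Suc d))" by (simp add: q'_def)
  then have "JJ m \<omega> t (q * P j) = JJ m \<omega> t (q' * P j) + c * JJ m \<omega> t (P (Suc d) * P j)"
    by (metis JJ_add JJ_smult distrib_right mult_smult_left)
  then show ?case using Suc.IH[OF \<open>degree q' \<le> d\<close>] Suc.prems orth by simp
qed

lemma L1': "(\<And>i. i \<ge> j \<Longrightarrow> coeff q i = 0) \<Longrightarrow> JJ m \<omega> t (q * P j) = 0"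
proof (cases j)
  case 0
  assume "\<And>i. i \<ge> j \<Longrightarrow> coeff q i = 0"
  then have "q = 0" using 0 by (simp add: poly_eq_iff)
  then show ?thesis by (simp add: JJ_0)
next
  case (Suc i)
  assume H: "\<And>i. i \<ge> j \<Longrightarrow> coeff q i = 0"
  have "degree q \<le> i" using H Suc by (intro degree_le) auto
  then show ?thesis using L1[of q i j] Suc by simp
qed

lemma L2: "(\<And>i. i > j \<Longrightarrow> coeff q i = 0) \<Longrightarrow>
   JJ m \<omega> t (q * P j) = coeff q j * hnorm (wgt m \<omega> t) P j"
proof -
  assume H: "\<And>i. i > j \<Longrightarrow> coeff q i = 0"
  define q' where "q' = q - smult (coeff q j) (P j)"
  have "JJ m \<omega> t (q' * P j) = 0"
  proof (rule L1')
    fix i assume "j \<le> i"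
    then show "coeff q' i = 0"
      using H[of i] coeffP_ge[of j i] by (cases "i = j") (auto simp: q'_def)
  qed
  moreover have "q = q' + smult (coeff q j) (P j)" by (simp add: q'_def)
  ultimately show ?thesis
    by (metis JJ_add JJ_smult distrib_right mult_smult_left hJ add_0)
qed

end


definition cc :: "(nat \<Rightarrow> real poly) \<Rightarrow> nat \<Rightarrow> real" where
  "cc P j = coeff (pCons 0 (P j)) j - coeff (P (Suc j)) j"

definition UU :: "(nat \<Rightarrow> real poly) \<Rightarrow> nat \<Rightarrow> real poly" where
  "UU P j = pCons 0 (P j) - P (Suc j)"

context
  fixes m :: nat and \<omega> t :: "nat \<Rightarrow> real" and P :: "nat \<Rightarrow> real poly"
  assumes OPS: "is_monic_OPS (wgt m \<omega> t) P"
begin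

lemma coeff_UU_gt: "k > j \<Longrightarrow> coeff (UU P j) k = 0"
proof -
  assume "k > j"
  then obtain k' where k: "k = Suc k'" and "k' \<ge> j" by (cases k) auto
  then show ?thesis
    using coeffP_ge[OF OPS, of j k'] coeffP_ge[OF OPS, of "Suc j" "Suc k'"] by (simp add: UU_def)
qed

lemma coeff_UU: "coeff (UU P j) j = cc P j"
  by (simp add: UU_def cc_def)

lemma E1: "2 * cc P j * hnorm (wgt m \<omega> t) P j
   = (\<Sum>k=1..m. \<omega> k * exp (-((t k)\<^sup>2)) * (poly (P j) (t k))\<^sup>2)"
proof -
  have eq: "DD (P j * P j) = smult 2 (pderiv (P j) * P j) - smult 2 (UU P j * P j) - smult 2 (P (Suc j) * P j)"
    by (rule poly_ext) (simp add: DD_def UU_def pderiv_mult algebra_simps)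
  have a: "JJ m \<omega> t (pderiv (P j) * P j) = 0"
    by (rule L1'[OF OPS]) (simp add: coeff_pderiv coeffP_ge[OF OPS])
  have b: "JJ m \<omega> t (UU P j * P j) = cc P j * hnorm (wgt m \<omega> t) P j"
    using L2[OF OPS, of j "UU P j"] coeff_UU_gt coeff_UU by simp
  have c: "JJ m \<omega> t (P (Suc j) * P j) = 0"
    using orth[OF OPS] by simp
  have "JJ m \<omega> t (DD (P j * P j)) = - 2 * cc P j * hnorm (wgt m \<omega> t) P j"
    using a b c unfolding eq by (simp add: JJ_lin)
  then show ?thesis unfolding JJ_DD by (simp add: power2_eq_square)
qed

lemma E2: "real (Suc i) * hnorm (wgt m \<omega> t) P i - 2 * hnorm (wgt m \<omega> t) P (Suc i)
   = - (\<Sum>k=1..m. \<omega> k * exp (-((t k)\<^sup>2)) * (poly (P (Suc i)) (t k) * poly (P i) (t k)))"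
proof -
  have eq: "DD (P (Suc i) * P i) = pderiv (P (Suc i)) * P i + pderiv (P i) * P (Suc i)
      - smult 2 (pCons 0 (P i) * P (Suc i))"
    by (rule poly_ext) (simp add: DD_def pderiv_mult algebra_simps)
  have a: "JJ m \<omega> t (pderiv (P (Suc i)) * P i) = real (Suc i) * hnorm (wgt m \<omega> t) P i"
    using L2[OF OPS, of i "pderiv (P (Suc i))"]
    by (simp add: coeff_pderiv coeffP_ge[OF OPS] lcP[OF OPS])
  have b: "JJ m \<omega> t (pderiv (P i) * P (Suc i)) = 0"
    by (rule L1'[OF OPS]) (simp add: coeff_pderiv coeffP_ge[OF OPS])
  have c: "JJ m \<omega> t (pCons 0 (P i) * P (Suc i)) = hnorm (wgt m \<omega> t) P (Suc i)"
  proof -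
    have "JJ m \<omega> t (pCons 0 (P i) * P (Suc i)) = coeff (pCons 0 (P i)) (Suc i) * hnorm (wgt m \<omega> t) P (Suc i)"
    proof (rule L2[OF OPS])
      fix k assume "Suc i < k"
      then obtain k' where "k = Suc k'" "k' > i" by (cases k) auto
      then show "coeff (pCons 0 (P i)) k = 0" by (simp add: coeffP_ge[OF OPS])
    qed
    then show ?thesis by (simp add: lcP[OF OPS])
  qed
  have "JJ m \<omega> t (DD (P (Suc i) * P i)) = real (Suc i) * hnorm (wgt m \<omega> t) P i - 2 * hnorm (wgt m \<omega> t) P (Suc i)"
    unfolding eq JJ_add JJ_diff JJ_smult a b c by simp
  then show ?thesis unfolding JJ_DD by simp
qed

lemma E3: "- coeff (P (Suc i)) i * hnorm (wgt m \<omega> t) P i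
     - 2 * (cc P (Suc i) + cc P i) * hnorm (wgt m \<omega> t) P (Suc i)
   = - (\<Sum>k=1..m. \<omega> k * exp (-((t k)\<^sup>2)) * (t k * poly (P (Suc i)) (t k) * poly (P i) (t k)))"
proof -
  define n where "n = Suc i"
  define v where "v = pCons 0 (pderiv (P n)) - smult (of_nat n) (P n)"
  have eq: "DD (pCons 0 (P n * P i)) = P n * P i + v * P i + smult (of_nat n) (P n * P i)
      + pCons 0 (pderiv (P i)) * P n
      - smult 2 (P (Suc n) * P n + UU P n * P n + pCons 0 (UU P i) * P n)"
    by (rule poly_ext) (simp add: DD_def UU_def v_def n_def pderiv_mult pderiv_pCons algebra_simps)
  have a1: "JJ m \<omega> t (P n * P i) = 0" using orth[OF OPS] by (simp add: n_def)
  have a2: "JJ m \<omega> t (v * P i) = - coeff (P n) i * hnorm (wgt m \<omega> t) P i"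
  proof -
    have "JJ m \<omega> t (v * P i) = coeff v i * hnorm (wgt m \<omega> t) P i"
    proof (rule L2[OF OPS])
      fix k assume "i < k"
      then obtain k' where k: "k = Suc k'" "k' \<ge> i" by (cases k) auto
      show "coeff v k = 0"
        using k coeffP_ge[OF OPS, of n k] by (simp add: v_def coeff_pderiv n_def)
    qed
    moreover have "coeff v i = - coeff (P n) i"
      by (cases i) (simp_all add: v_def coeff_pderiv n_def algebra_simps)
    ultimately show ?thesis by simp
  qed
  have a3: "JJ m \<omega> t (smult (of_nat n) (P n * P i)) = 0" using a1 by (simp add: JJ_lin)
  have a4: "JJ m \<omega> t (pCons 0 (pderiv (P i)) * P n) = 0"
  proof (rule L1'[OF OPS])
    fix k assume "n \<le> k"
    then obtain k' where k: "k = Suc k'" "k' \<ge> i" by (cases k) (auto simp: n_def)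
    then show "coeff (pCons 0 (pderiv (P i))) k = 0"
      by (simp add: coeff_pderiv coeffP_ge[OF OPS])
  qed
  have a5: "JJ m \<omega> t (P (Suc n) * P n) = 0" using orth[OF OPS] by simp
  have a6: "JJ m \<omega> t (UU P n * P n) = cc P n * hnorm (wgt m \<omega> t) P n"
    using L2[OF OPS, of n "UU P n"] coeff_UU_gt coeff_UU by simp
  have a7: "JJ m \<omega> t (pCons 0 (UU P i) * P n) = cc P i * hnorm (wgt m \<omega> t) P n"
  proof -
    have "JJ m \<omega> t (pCons 0 (UU P i) * P n) = coeff (pCons 0 (UU P i)) n * hnorm (wgt m \<omega> t) P n"
    proof (rule L2[OF OPS])
      fix k assume "n < k"
      then obtain k' where "k = Suc k'" "k' > i" by (cases k) (auto simp: n_def)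
      then show "coeff (pCons 0 (UU P i)) k = 0" by (simp add: coeff_UU_gt)
    qed
    then show ?thesis by (simp add: n_def coeff_UU)
  qed
  have "JJ m \<omega> t (DD (pCons 0 (P n * P i))) = - coeff (P n) i * hnorm (wgt m \<omega> t) P i
     - 2 * (cc P n + cc P i) * hnorm (wgt m \<omega> t) P n"
    unfolding eq using a1 a2 a3 a4 a5 a6 a7 by (simp add: JJ_lin algebra_simps)
  then show ?thesis unfolding JJ_DD by (simp add: n_def mult.assoc)
qed

end


theorem lemma2p9:
  fixes m n :: nat and t \<omega> :: "nat \<Rightarrow> real" and P :: "nat \<Rightarrow> real poly"
  assumes "m \<ge> 1"
    and "\<forall>k. 1 \<le> k \<and> k < m \<longrightarrow> t k < t (k + 1)"
    and "\<forall>l\<le>m. (\<Sum>k\<le>l. \<omega> k) \<ge> 0"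
    and "\<exists>x. wgt m \<omega> t x \<noteq> 0"
    and "is_monic_OPS (wgt m \<omega> t) P"
    and "n \<ge> 1"
  shows "coeff (P n) (n - 1) = - (1/2) * (\<Sum>j<n. \<Sum>k=1..m. RR (wgt m \<omega> t) P \<omega> t j k) \<and>
        ((\<forall>k\<in>{1..m}. RR (wgt m \<omega> t) P \<omega> t n k \<noteq> 0) \<longrightarrow>
         coeff (P n) (n - 1) =
           - (1/2) * ((\<Sum>k=1..m. rr (wgt m \<omega> t) P \<omega> t n k) + real n)
                   * (\<Sum>k=1..m. RR (wgt m \<omega> t) P \<omega> t n k)
           - (\<Sum>k=1..m. (rr (wgt m \<omega> t) P \<omega> t n k)\<^sup>2 / RR (wgt m \<omega> t) P \<omega> t n k)
           + (\<Sum>k=1..m. t k * rr (wgt m \<omega> t) P \<omega> t n k))"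
proof -
  note OPS = assms(5)
  obtain i where n: "n = Suc i" using assms(6) by (cases n) auto
  define W where "W = wgt m \<omega> t"
  define h where "h = hnorm W P"
  define e where "e = (\<lambda>k. \<omega> k * exp (-((t k)\<^sup>2)))"
  define a where "a = (\<lambda>k. poly (P n) (t k))"
  define b where "b = (\<lambda>k. poly (P i) (t k))"
  have hpos': "\<And>j. h j > 0" unfolding h_def W_def using hpos[OF OPS] by simp
  have RRsum: "(\<Sum>k=1..m. RR W P \<omega> t j k) = 2 * cc P j" for j
  proof -
    have "(\<Sum>k=1..m. RR W P \<omega> t j k) = (\<Sum>k=1..m. \<omega> k * exp (-((t k)\<^sup>2)) * (poly (P j) (t k))\<^sup>2) / h j"
      by (simp add: RR_def h_def sum_divide_distrib)
    also have "\<dots> = 2 * cc P j"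
      using E1[OF OPS, of j, symmetric] hpos'[of j] by (simp add: h_def W_def)
    finally show ?thesis .
  qed
  have tele: "(\<Sum>j<n. cc P j) = - coeff (P n) (n - 1)"
  proof -
    have "(\<Sum>j<n. cc P j) = (\<Sum>j<n. coeff (pCons 0 (P j)) j - coeff (pCons 0 (P (Suc j))) (Suc j))"
      by (simp add: cc_def)
    also have "\<dots> = coeff (pCons 0 (P 0)) 0 - coeff (pCons 0 (P n)) n"
      by (rule sum_lessThan_telescope')
    finally show ?thesis by (simp add: n)
  qed
  have part1: "coeff (P n) (n - 1) = - (1/2) * (\<Sum>j<n. \<Sum>k=1..m. RR W P \<omega> t j k)"
    unfolding RRsum by (simp add: sum_distrib_left[symmetric] tele)
  have part2: "coeff (P n) (n - 1) =
           - (1/2) * ((\<Sum>k=1..m. rr W P \<omega> t n k) + real n) * (\<Sum>k=1..m. RR W P \<omega> t n k)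
           - (\<Sum>k=1..m. (rr W P \<omega> t n k)\<^sup>2 / RR W P \<omega> t n k)
           + (\<Sum>k=1..m. t k * rr W P \<omega> t n k)"
    if nz: "\<forall>k\<in>{1..m}. RR W P \<omega> t n k \<noteq> 0"
  proof -
    have rr_eq: "rr W P \<omega> t n k = e k * a k * b k / h i" for k
      by (simp add: rr_def e_def a_def b_def h_def n)
    have RR_eq: "RR W P \<omega> t n k = e k * (a k)\<^sup>2 / h n" for k
      by (simp add: RR_def e_def a_def h_def)
    have s1: "(\<Sum>k=1..m. rr W P \<omega> t n k) = (2 * h n - real n * h i) / h i"
    proof -
      have "(\<Sum>k=1..m. rr W P \<omega> t n k) = (\<Sum>k=1..m. e k * a k * b k) / h i"
        by (simp add: rr_eq sum_divide_distrib)
      also have "(\<Sum>k=1..m. e k * a k * b k) = 2 * h n - real n * h i"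
        using E2[OF OPS, of i] by (simp add: e_def a_def b_def h_def W_def n mult.assoc)
      finally show ?thesis .
    qed
    have s2: "(\<Sum>k=1..m. (rr W P \<omega> t n k)\<^sup>2 / RR W P \<omega> t n k) = h n / (h i)\<^sup>2 * (2 * cc P i * h i)"
    proof -
      have "(\<Sum>k=1..m. (rr W P \<omega> t n k)\<^sup>2 / RR W P \<omega> t n k)
          = (\<Sum>k=1..m. h n / (h i)\<^sup>2 * (e k * (b k)\<^sup>2))"
      proof (rule sum.cong[OF refl])
        fix k assume "k \<in> {1..m}"
        then have "RR W P \<omega> t n k \<noteq> 0" using nz by auto
        then have "e k \<noteq> 0" "a k \<noteq> 0" unfolding RR_eq by auto
        then show "(rr W P \<omega> t n k)\<^sup>2 / RR W P \<omega> t n k = h n / (h i)\<^sup>2 * (e k * (b k)\<^sup>2)"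
          unfolding rr_eq RR_eq using hpos'[of i] hpos'[of n]
          by (simp add: field_simps power2_eq_square)
      qed
      also have "\<dots> = h n / (h i)\<^sup>2 * (2 * cc P i * h i)"
        unfolding sum_distrib_left[symmetric] using E1[OF OPS, of i, symmetric]
        by (simp add: e_def b_def h_def W_def)
      finally show ?thesis .
    qed
    have s3: "(\<Sum>k=1..m. t k * rr W P \<omega> t n k)
        = (coeff (P n) i * h i + 2 * (cc P n + cc P i) * h n) / h i"
    proof -
      have "(\<Sum>k=1..m. t k * rr W P \<omega> t n k) = (\<Sum>k=1..m. e k * (t k * a k * b k)) / h i"
        by (simp add: rr_eq sum_divide_distrib mult_ac)
      also have "(\<Sum>k=1..m. e k * (t k * a k * b k)) = coeff (P n) i * h i + 2 * (cc P n + cc P i) * h n"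
        using E3[OF OPS, of i] by (simp add: e_def a_def b_def h_def W_def n)
      finally show ?thesis .
    qed
    show ?thesis
      unfolding s1 s2 s3 RRsum using hpos'[of i] hpos'[of n]
      by (simp add: n field_simps power2_eq_square)
  qed
  show ?thesis using part1 part2 unfolding W_def by blast
qed

end
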